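(* Let $N\ge 1$ and let the parameter space $\Theta\subseteq\mathcal{R}$ of the correlated Bernoulli random graph model be nondegenerate. Then the disagreement vector statistic $\mathcal{H}$ is a complete and sufficient statistic for the family $\{\mathbb{P}_\theta:\theta\in\Theta\}$. Completeness here means: for every $f:\{0,\star,1\}^N\to\mathbb{R}$, if $\mathbb{E}_\theta(f(\mathcal{H}))=0$ for all $\theta\in\Theta$, then $f$ is the zero function.
   Context: Correlated Bernoulli random graph model: fix a positive integer $N$ and let $\mathcal{R}=\{(p_1,\dots,p_N,\varrho_1,\dots,\varrho_N): p_i,\varrho_i\in[0,1]\}$. A parameter space is any subset $\Theta\subseteq\mathcal{R}$. For $\theta=(p_1,\dots,p_N,\varrho_1,\dots,\varrho_N)\in\Theta$, the random vectors $X=(X_1,\dots,X_N)$, $Y=(Y_1,\dots,Y_N)\in\{0,1\}^N$ are such that the pairs $(X_i,Y_i)$, $i=1,\dots,N$, are independent; $X_i,Y_i$ are each marginally Bernoulli$(p_i)$ with Pearson correlation $\varrho_i$. Equivalently $\mathbb{P}(X_i=Y_i=1)=p_i^2+\varrho_ip_i(1-p_i)$, $\mathbb{P}(X_i=Y_i=0)=(1-p_i)^2+\varrho_ip_i(1-p_i)$, $\mathbb{P}(X_i=1,Y_i=0)=\mathbb{P}(X_i=0,Y_i=1)=(1-\varrho_i)p_i(1-p_i)$. The sample space is $\mathcal{X}=\{(x,y):x,y\in\{0,1\}^N\}$; a statistic is any function on $\mathcal{X}$. Let $\mathcal{R}^o=\{(p_1,\dots,p_N,0,\dots,0):p_1,\dots,p_N\in\mathbb{R}\}$.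 $\Theta$ is called nondegenerate if $\Theta\cap\mathcal{R}^o$ has an interior point relative to $\mathcal{R}^o$, i.e. there exist $z\in\Theta\cap\mathcal{R}^o$ and $\epsilon>0$ such that $\Theta\cap\mathcal{R}^o$ contains every point of $\mathcal{R}^o$ at distance less than $\epsilon$ from $z$. The disagreement vector statistic $\mathcal{H}:\mathcal{X}\to\{0,\star,1\}^N$ has $i$th component $1$ if $x_i=y_i=1$, $0$ if $x_i=y_i=0$, and $\star$ if $x_i\ne y_i$. *)

theory Defs
  imports Complex_Main
begin

text \<open>Vectors in \<open>{0,1}^N\<close> (resp. \<open>\<real>^N\<close>, \<open>{0,\<star>,1}^N\<close>) are represented as
  functions on \<open>nat\<close> indexed by \<open>0..<N\<close> with a fixed default value outside.\<close>

type_synonym param = "(nat \<Rightarrow> real) \<times> (nat \<Rightarrow> real)"   \<comment> \<open>(p, rho)\<close>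
type_synonym sample = "(nat \<Rightarrow> bool) \<times> (nat \<Rightarrow> bool)"

datatype dv = DZero | DStar | DOne

definition param_space_R :: "nat \<Rightarrow> param set" where
  "param_space_R N = {(p, r). (\<forall>i<N. 0 \<le> p i \<and> p i \<le> 1 \<and> 0 \<le> r i \<and> r i \<le> 1)
                           \<and> (\<forall>i\<ge>N. p i = 0 \<and> r i = 0)}"

definition R0 :: "nat \<Rightarrow> param set" where
  "R0 N = {(p, r). (\<forall>i\<ge>N. p i = 0) \<and> (\<forall>i. r i = 0)}"

definition param_dist :: "nat \<Rightarrow> param \<Rightarrow> param \<Rightarrow> real" where
  "param_dist N a b = sqrt (\<Sum>i<N. (fst a i - fst b i)^2 + (snd a i - snd b i)^2)"

definition nondegenerate :: "nat \<Rightarrow> param set \<Rightarrow> bool" where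
  "nondegenerate N \<Theta> \<longleftrightarrow> (\<exists>z \<in> \<Theta> \<inter> R0 N. \<exists>\<epsilon>>0.
      \<forall>w \<in> R0 N. param_dist N w z < \<epsilon> \<longrightarrow> w \<in> \<Theta> \<inter> R0 N)"

definition sample_space :: "nat \<Rightarrow> sample set" where
  "sample_space N = {(x, y). \<forall>i\<ge>N. \<not> x i \<and> \<not> y i}"

text \<open>Joint probability of \<open>(X_i, Y_i) = (a, b)\<close>.\<close>
definition pair_prob :: "real \<Rightarrow> real \<Rightarrow> bool \<Rightarrow> bool \<Rightarrow> real" where
  "pair_prob p r a b =
     (if a \<and> b then p^2 + r * p * (1 - p)
      else if \<not> a \<and> \<not> b then (1 - p)^2 + r * p * (1 - p)
      else (1 - r) * p * (1 - p))"

definition prob_pt :: "nat \<Rightarrow> param \<Rightarrow> sample \<Rightarrow> real" where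
  "prob_pt N \<theta> \<omega> = (if \<omega> \<in> sample_space N
      then (\<Prod>i<N. pair_prob (fst \<theta> i) (snd \<theta> i) (fst \<omega> i) (snd \<omega> i)) else 0)"

definition expect :: "nat \<Rightarrow> param \<Rightarrow> (sample \<Rightarrow> real) \<Rightarrow> real" where
  "expect N \<theta> g = (\<Sum>\<omega>\<in>sample_space N. prob_pt N \<theta> \<omega> * g \<omega>)"

definition dv_space :: "nat \<Rightarrow> (nat \<Rightarrow> dv) set" where
  "dv_space N = {h. \<forall>i\<ge>N. h i = DZero}"

definition disagreement :: "nat \<Rightarrow> sample \<Rightarrow> (nat \<Rightarrow> dv)" where
  "disagreement N \<omega> = (\<lambda>i. if i < N then
      (if fst \<omega> i \<and> snd \<omega> i then DOne
       else if \<not> fst \<omega> i \<and> \<not> snd \<omega> i then DZero else DStar)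
     else DZero)"

text \<open>Sufficiency (discrete sample space): there is a version of the conditional
  probability \<open>P(\<omega> | T = T \<omega>)\<close> not depending on \<open>\<theta>\<close>.\<close>
definition sufficient :: "nat \<Rightarrow> param set \<Rightarrow> (sample \<Rightarrow> 'b) \<Rightarrow> bool" where
  "sufficient N \<Theta> T \<longleftrightarrow> (\<exists>K :: sample \<Rightarrow> real. \<forall>\<theta>\<in>\<Theta>. \<forall>\<omega>\<in>sample_space N.
      prob_pt N \<theta> \<omega> = K \<omega> * (\<Sum>\<omega>'\<in>{\<omega>'\<in>sample_space N. T \<omega>' = T \<omega>}. prob_pt N \<theta> \<omega>'))"

definition complete_H :: "nat \<Rightarrow> param set \<Rightarrow> bool" where
  "complete_H N \<Theta> \<longleftrightarrow> (\<forall>f :: (nat \<Rightarrow> dv) \<Rightarrow> real.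
      (\<forall>\<theta>\<in>\<Theta>. expect N \<theta> (\<lambda>\<omega>. f (disagreement N \<omega>)) = 0)
      \<longrightarrow> (\<forall>h\<in>dv_space N. f h = 0))"

end

theory Submission imports Defs begin

definition ext :: "nat \<Rightarrow> sample \<Rightarrow> bool \<Rightarrow> bool \<Rightarrow> sample" where
  "ext n \<omega> a b = ((fst \<omega>)(n := a), (snd \<omega>)(n := b))"

lemma sample_space_Suc:
  "sample_space (Suc n) = (\<lambda>(\<omega>,ab). ext n \<omega> (fst ab) (snd ab)) ` (sample_space n \<times> UNIV)"
proof
  show "sample_space (Suc n) \<subseteq> (\<lambda>(\<omega>,ab). ext n \<omega> (fst ab) (snd ab)) ` (sample_space n \<times> UNIV)"
  proof
    fix w assume w: "w \<in> sample_space (Suc n)"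
    obtain x y where xy: "w = (x, y)" by force
    have "((x(n:=False), y(n:=False)), (x n, y n)) \<in> sample_space n \<times> UNIV"
      using w xy by (auto simp: sample_space_def)
    moreover have "w = (\<lambda>(\<omega>,ab). ext n \<omega> (fst ab) (snd ab)) ((x(n:=False), y(n:=False)), (x n, y n))"
      by (simp add: xy ext_def)
    ultimately show "w \<in> (\<lambda>(\<omega>,ab). ext n \<omega> (fst ab) (snd ab)) ` (sample_space n \<times> UNIV)"
      by blast
  qed
next
  show "(\<lambda>(\<omega>,ab). ext n \<omega> (fst ab) (snd ab)) ` (sample_space n \<times> UNIV) \<subseteq> sample_space (Suc n)"
    by (auto simp: sample_space_def ext_def)
qed

lemma inj_ext: "inj_on (\<lambda>(\<omega>,ab). ext n \<omega> (fst ab) (snd ab)) (sample_space n \<times> UNIV)"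
proof (rule inj_onI)
  fix u v assume su: "u \<in> sample_space n \<times> UNIV" and sv: "v \<in> sample_space n \<times> UNIV"
    and e0: "(\<lambda>(\<omega>,ab). ext n \<omega> (fst ab) (snd ab)) u = (\<lambda>(\<omega>,ab). ext n \<omega> (fst ab) (snd ab)) v"
  obtain x y a b where u: "u = ((x,y),(a,b))" by (metis prod.exhaust)
  obtain x' y' a' b' where v: "v = ((x',y'),(a',b'))" by (metis prod.exhaust)
  have s: "(x, y) \<in> sample_space n" "(x', y') \<in> sample_space n" using su sv u v by auto
  have e: "ext n (x, y) a b = ext n (x', y') a' b'" using e0 u v by simp
  have e1: "x(n:=a) = x'(n:=a')" and e2: "y(n:=b) = y'(n:=b')" using e by (auto simp: ext_def)
  have "a = a'" using fun_cong[OF e1, of n] by simp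
  moreover have "b = b'" using fun_cong[OF e2, of n] by simp
  moreover have "x = x'"
  proof
    fix i show "x i = x' i"
      using fun_cong[OF e1, of i] s by (cases "i = n") (auto simp: sample_space_def)
  qed
  moreover have "y = y'"
  proof
    fix i show "y i = y' i"
      using fun_cong[OF e2, of i] s by (cases "i = n") (auto simp: sample_space_def)
  qed
  ultimately show "u = v" using u v by simp
qed

lemma UNIV_bool2: "(UNIV :: (bool \<times> bool) set) = {(True,True),(True,False),(False,True),(False,False)}"
  by (auto)

lemma sum_split:
  "(\<Sum>\<omega>\<in>sample_space (Suc n). G \<omega>) = (\<Sum>\<omega>\<in>sample_space n.
      G (ext n \<omega> True True) + G (ext n \<omega> True False) + G (ext n \<omega> False True) + G (ext n \<omega> False False))"
proof -
  have "(\<Sum>\<omega>\<in>sample_space (Suc n). G \<omega>) =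
     (\<Sum>z\<in>sample_space n \<times> UNIV. G ((\<lambda>(\<omega>,ab). ext n \<omega> (fst ab) (snd ab)) z))"
    unfolding sample_space_Suc by (rule sum.reindex[OF inj_ext, unfolded comp_def])
  also have "\<dots> = (\<Sum>\<omega>\<in>sample_space n. \<Sum>ab\<in>UNIV. G (ext n \<omega> (fst ab) (snd ab)))"
    by (simp add: sum.cartesian_product split_def)
  also have "\<dots> = (\<Sum>\<omega>\<in>sample_space n.
      G (ext n \<omega> True True) + G (ext n \<omega> True False) + G (ext n \<omega> False True) + G (ext n \<omega> False False))"
    by (simp add: UNIV_bool2 add.assoc)
  finally show ?thesis .
qed

lemma finite_sample_space: "finite (sample_space n)"
proof (induction n)
  case 0
  have "sample_space 0 = {(\<lambda>_. False, \<lambda>_. False)}" by (auto simp: sample_space_def)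
  then show ?case by simp
next
  case (Suc n) then show ?case unfolding sample_space_Suc by simp
qed

lemma sum_prod_split:
  fixes g :: "nat \<Rightarrow> bool \<Rightarrow> bool \<Rightarrow> real"
  shows "(\<Sum>\<omega>\<in>sample_space n. \<Prod>i<n. g i (fst \<omega> i) (snd \<omega> i)) =
   (\<Prod>i<n. g i True True + g i True False + g i False True + g i False False)"
proof (induction n)
  case 0
  have "sample_space 0 = {(\<lambda>_. False, \<lambda>_. False)}" by (auto simp: sample_space_def)
  then show ?case by simp
next
  case (Suc n)
  have pe: "(\<Prod>i<Suc n. g i (fst (ext n \<omega> a b) i) (snd (ext n \<omega> a b) i)) =
     (\<Prod>i<n. g i (fst \<omega> i) (snd \<omega> i)) * g n a b" for \<omega> a b
    by (simp add: ext_def)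
  let ?c = "g n True True + g n True False + g n False True + g n False False"
  have "(\<Sum>\<omega>\<in>sample_space (Suc n). \<Prod>i<Suc n. g i (fst \<omega> i) (snd \<omega> i))
     = (\<Sum>\<omega>\<in>sample_space n. (\<Prod>i<n. g i (fst \<omega> i) (snd \<omega> i)) * ?c)"
    by (simp only: sum_split pe) (simp add: algebra_simps)
  also have "\<dots> = (\<Sum>\<omega>\<in>sample_space n. (\<Prod>i<n. g i (fst \<omega> i) (snd \<omega> i))) * ?c"
    by (simp add: sum_distrib_right)
  also have "\<dots> = (\<Prod>i<Suc n. g i True True + g i True False + g i False True + g i False False)"
    by (simp add: Suc.IH)
  finally show ?case .
qed


definition dd :: "bool \<Rightarrow> bool \<Rightarrow> dv" where
  "dd a b = (if a \<and> b then DOne else if \<not> a \<and> \<not> b then DZero else DStar)"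

lemma dis_eq: "disagreement N \<omega> = (\<lambda>i. if i < N then dd (fst \<omega> i) (snd \<omega> i) else DZero)"
  by (simp add: disagreement_def dd_def fun_eq_iff)

lemma dis_eq_iff: "(disagreement N \<omega>' = disagreement N \<omega>) \<longleftrightarrow>
   (\<forall>i<N. dd (fst \<omega>' i) (snd \<omega>' i) = dd (fst \<omega> i) (snd \<omega> i))"
  unfolding dis_eq fun_eq_iff by auto

lemma prod_if:
  fixes n :: nat
  shows "(if \<forall>i<n. Q i then (\<Prod>i<n. f i) else 0) = (\<Prod>i<n. if Q i then f i else (0::real))"
proof (cases "\<forall>i<n. Q i")
  case True
  then have "(\<Prod>i<n. if Q i then f i else (0::real)) = (\<Prod>i<n. f i)"
    by (intro prod.cong) auto
  with True show ?thesis by simp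
next
  case False
  then obtain j where "j < n" "\<not> Q j" by blast
  then have "(\<Prod>i<n. if Q i then f i else (0::real)) = 0"
    by (subst prod_zero_iff) (auto intro!: bexI[of _ j])
  with False show ?thesis by simp
qed

lemma quad:
  fixes A B C c h :: real
  assumes h: "h \<noteq> 0"
    and q0: "c^2*A + (1-c)^2*B + 2*c*(1-c)*C = 0"
    and q1: "(c+h)^2*A + (1-(c+h))^2*B + 2*(c+h)*(1-(c+h))*C = 0"
    and q2: "(c-h)^2*A + (1-(c-h))^2*B + 2*(c-h)*(1-(c-h))*C = 0"
  shows "A = 0 \<and> B = 0 \<and> C = 0"
proof -
  define \<alpha> where "\<alpha> = A + B - 2*C"
  define \<beta> where "\<beta> = 2*C - 2*B"
  have Q: "t^2*A + (1-t)^2*B + 2*t*(1-t)*C = \<alpha>*t^2 + \<beta>*t + B" for t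
    by (simp add: \<alpha>_def \<beta>_def power2_eq_square algebra_simps)
  have e1: "(\<alpha>*(c+h)^2+\<beta>*(c+h)+B) + (\<alpha>*(c-h)^2+\<beta>*(c-h)+B) - 2*(\<alpha>*c^2+\<beta>*c+B) = 2*\<alpha>*h^2"
    by (simp add: power2_eq_square algebra_simps)
  have "2*\<alpha>*h^2 = 0"
  proof -
    have "2*\<alpha>*h^2 = (\<alpha>*(c+h)^2+\<beta>*(c+h)+B) + (\<alpha>*(c-h)^2+\<beta>*(c-h)+B) - 2*(\<alpha>*c^2+\<beta>*c+B)"
      using e1 by simp
    also have "\<dots> = 0" using q0 q1 q2 unfolding Q by simp
    finally show ?thesis .
  qed
  then have a0: "\<alpha> = 0" using h by simp
  have e2: "(\<alpha>*(c+h)^2+\<beta>*(c+h)+B) - (\<alpha>*(c-h)^2+\<beta>*(c-h)+B) = 2*h*(2*\<alpha>*c+\<beta>)"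
    by (simp add: power2_eq_square algebra_simps)
  have "2*h*(2*\<alpha>*c+\<beta>) = 0"
  proof -
    have "2*h*(2*\<alpha>*c+\<beta>) = (\<alpha>*(c+h)^2+\<beta>*(c+h)+B) - (\<alpha>*(c-h)^2+\<beta>*(c-h)+B)"
      using e2 by simp
    also have "\<dots> = 0" using q1 q2 unfolding Q by simp
    finally show ?thesis .
  qed
  then have b0: "\<beta> = 0" using h a0 by simp
  have "B = 0" using q0 a0 b0 unfolding Q by simp
  then show ?thesis using a0 b0 by (simp add: \<alpha>_def \<beta>_def)
qed

lemma lin4:
  fixes P t A B C :: real
  shows "P * t^2 * A + P * (t * (1 - t)) * C + P * (t * (1 - t)) * C + P * (1 - t)^2 * B
     = t^2 * (P * A) + (1 - t)^2 * (P * B) + 2 * t * (1 - t) * (P * C)"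
  by (simp add: algebra_simps power2_eq_square)

lemma dis_ext: "disagreement (Suc n) (ext n \<omega> a b) = (disagreement n \<omega>)(n := dd a b)"
  by (auto simp: fun_eq_iff dis_eq ext_def)

lemma keyL:
  "\<And>F c \<delta>. \<delta> > 0 \<Longrightarrow> (\<And>p. (\<forall>i<n. \<bar>p i - c i\<bar> < \<delta>) \<Longrightarrow>
     (\<Sum>\<omega>\<in>sample_space n. (\<Prod>i<n. pair_prob (p i) 0 (fst \<omega> i) (snd \<omega> i)) * F (disagreement n \<omega>)) = 0)
   \<Longrightarrow> \<forall>h\<in>dv_space n. F h = 0"
proof (induction n)
  case 0
  have S: "sample_space 0 = {(\<lambda>_. False, \<lambda>_. False)}" by (auto simp: sample_space_def)
  have D: "dv_space 0 = {\<lambda>_. DZero}" by (auto simp: dv_space_def)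
  have "F (disagreement 0 (\<lambda>_. False, \<lambda>_. False)) = 0" using "0.prems"(2)[of c] S by simp
  moreover have "disagreement 0 (\<lambda>_. False, \<lambda>_. False) = (\<lambda>_. DZero)" by (simp add: disagreement_def)
  ultimately show ?case using D by simp
next
  case (Suc n)
  note hyp = Suc.prems(2)
  define G where "G e p = (\<Sum>\<omega>\<in>sample_space n.
      (\<Prod>i<n. pair_prob (p i) 0 (fst \<omega> i) (snd \<omega> i)) * F ((disagreement n \<omega>)(n := e)))" for e p
  have prodext: "(\<Prod>i<Suc n. pair_prob (p i) 0 (fst (ext n \<omega> a b) i) (snd (ext n \<omega> a b) i)) =
     (\<Prod>i<n. pair_prob (p i) 0 (fst \<omega> i) (snd \<omega> i)) * pair_prob (p n) 0 a b" for p \<omega> a b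
    by (simp add: ext_def)
  have eq: "(\<Sum>\<omega>\<in>sample_space (Suc n). (\<Prod>i<Suc n. pair_prob (p i) 0 (fst \<omega> i) (snd \<omega> i)) * F (disagreement (Suc n) \<omega>))
     = (p n)^2 * G DOne p + (1 - p n)^2 * G DZero p + 2 * p n * (1 - p n) * G DStar p" for p
  proof -
    let ?P = "\<lambda>\<omega>. \<Prod>i<n. pair_prob (p i) 0 (fst \<omega> i) (snd \<omega> i)"
    let ?F = "\<lambda>\<omega> e. F ((disagreement n \<omega>)(n := e))"
    have "(\<Sum>\<omega>\<in>sample_space (Suc n). (\<Prod>i<Suc n. pair_prob (p i) 0 (fst \<omega> i) (snd \<omega> i)) * F (disagreement (Suc n) \<omega>))
      = (\<Sum>\<omega>\<in>sample_space n. ?P \<omega> * pair_prob (p n) 0 True True * ?F \<omega> (dd True True)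
          + ?P \<omega> * pair_prob (p n) 0 True False * ?F \<omega> (dd True False)
          + ?P \<omega> * pair_prob (p n) 0 False True * ?F \<omega> (dd False True)
          + ?P \<omega> * pair_prob (p n) 0 False False * ?F \<omega> (dd False False))"
      by (simp only: sum_split dis_ext prodext)
    also have "\<dots> = (\<Sum>\<omega>\<in>sample_space n. (p n)^2 * (?P \<omega> * ?F \<omega> DOne)
          + (1 - p n)^2 * (?P \<omega> * ?F \<omega> DZero) + 2 * p n * (1 - p n) * (?P \<omega> * ?F \<omega> DStar))"
    proof (rule sum.cong[OF refl])
      fix \<omega>
      have a: "dd True True = DOne" "dd True False = DStar" "dd False True = DStar" "dd False False = DZero"
        by (simp_all add: dd_def)
      have b: "pair_prob t 0 True True = t^2" "pair_prob t 0 True False = t * (1 - t)"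
        "pair_prob t 0 False True = t * (1 - t)" "pair_prob t 0 False False = (1 - t)^2" for t
        by (simp_all add: pair_prob_def)
      show "?P \<omega> * pair_prob (p n) 0 True True * ?F \<omega> (dd True True)
          + ?P \<omega> * pair_prob (p n) 0 True False * ?F \<omega> (dd True False)
          + ?P \<omega> * pair_prob (p n) 0 False True * ?F \<omega> (dd False True)
          + ?P \<omega> * pair_prob (p n) 0 False False * ?F \<omega> (dd False False)
          = (p n)^2 * (?P \<omega> * ?F \<omega> DOne)
          + (1 - p n)^2 * (?P \<omega> * ?F \<omega> DZero) + 2 * p n * (1 - p n) * (?P \<omega> * ?F \<omega> DStar)"
        unfolding a b by (rule lin4)
    qed
    also have "\<dots> = (p n)^2 * G DOne p + (1 - p n)^2 * G DZero p + 2 * p n * (1 - p n) * G DStar p"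
      unfolding G_def by (simp only: sum.distrib sum_distrib_left)
    finally show ?thesis .
  qed
  have Gind: "G e (p(n := t)) = G e p" for e p t
  proof -
    have "(\<Prod>i<n. pair_prob ((p(n := t)) i) 0 (fst \<omega> i) (snd \<omega> i)) =
          (\<Prod>i<n. pair_prob (p i) 0 (fst \<omega> i) (snd \<omega> i))" for \<omega>
      by (rule prod.cong) auto
    then show ?thesis unfolding G_def by simp
  qed
  have G0: "G e p = 0" if box: "\<forall>i<n. \<bar>p i - c i\<bar> < \<delta>" for e p
  proof -
    have Qt: "t^2 * G DOne p + (1 - t)^2 * G DZero p + 2 * t * (1 - t) * G DStar p = 0"
      if "\<bar>t - c n\<bar> < \<delta>" for t
    proof -
      have "\<forall>i<Suc n. \<bar>(p(n:=t)) i - c i\<bar> < \<delta>" using box that by (auto simp: less_Suc_eq)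
      from hyp[OF this] show ?thesis unfolding eq Gind by simp
    qed
    have "G DOne p = 0 \<and> G DZero p = 0 \<and> G DStar p = 0"
    proof (rule quad[of "\<delta>/2" "c n"])
      show "\<delta>/2 \<noteq> 0" using Suc.prems(1) by simp
      show "(c n)^2 * G DOne p + (1 - c n)^2 * G DZero p + 2 * c n * (1 - c n) * G DStar p = 0"
        by (rule Qt) (use Suc.prems(1) in simp)
      show "(c n + \<delta>/2)^2 * G DOne p + (1 - (c n + \<delta>/2))^2 * G DZero p + 2 * (c n + \<delta>/2) * (1 - (c n + \<delta>/2)) * G DStar p = 0"
        by (rule Qt) (use Suc.prems(1) in simp)
      show "(c n - \<delta>/2)^2 * G DOne p + (1 - (c n - \<delta>/2))^2 * G DZero p + 2 * (c n - \<delta>/2) * (1 - (c n - \<delta>/2)) * G DStar p = 0"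
        by (rule Qt) (use Suc.prems(1) in simp)
    qed
    then show ?thesis by (cases e) auto
  qed
  have IHe: "\<forall>h\<in>dv_space n. F (h(n := e)) = 0" for e
  proof (rule Suc.IH[OF Suc.prems(1), of c "\<lambda>h. F (h(n := e))"])
    fix p assume box: "\<forall>i<n. \<bar>p i - c i\<bar> < \<delta>"
    show "(\<Sum>\<omega>\<in>sample_space n. (\<Prod>i<n. pair_prob (p i) 0 (fst \<omega> i) (snd \<omega> i)) * F ((disagreement n \<omega>)(n := e))) = 0"
      using G0[OF box, of e] unfolding G_def .
  qed
  show ?case
  proof
    fix h assume h: "h \<in> dv_space (Suc n)"
    have "h(n := DZero) \<in> dv_space n" using h by (auto simp: dv_space_def)
    from IHe[of "h n"] this have "F ((h(n := DZero))(n := h n)) = 0" by blast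
    then show "F h = 0" by simp
  qed
qed


lemma suff:
  "sufficient N \<Theta> (disagreement N)"
  unfolding sufficient_def
proof (intro exI ballI)
  fix \<theta> :: param and \<omega> :: sample assume \<omega>: "\<omega> \<in> sample_space N"
  obtain p r where \<theta>: "\<theta> = (p, r)" by (metis prod.exhaust)
  define pp where "pp i a b = pair_prob (p i) (r i) a b" for i a b
  define c where "c i = (if fst \<omega> i = snd \<omega> i then 1 else (2::real))" for i
  have pt: "prob_pt N \<theta> \<omega>' = (\<Prod>i<N. pp i (fst \<omega>' i) (snd \<omega>' i))" if "\<omega>' \<in> sample_space N" for \<omega>'
    using that by (simp add: prob_pt_def \<theta> pp_def)
  have "(\<Sum>\<omega>'\<in>{\<omega>'\<in>sample_space N. disagreement N \<omega>' = disagreement N \<omega>}. prob_pt N \<theta> \<omega>')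
      = (\<Sum>\<omega>'\<in>sample_space N. if disagreement N \<omega>' = disagreement N \<omega> then prob_pt N \<theta> \<omega>' else 0)"
    by (rule sum.inter_filter[OF finite_sample_space])
  also have "\<dots> = (\<Sum>\<omega>'\<in>sample_space N. \<Prod>i<N. if dd (fst \<omega>' i) (snd \<omega>' i) = dd (fst \<omega> i) (snd \<omega> i)
        then pp i (fst \<omega>' i) (snd \<omega>' i) else 0)"
  proof (rule sum.cong[OF refl])
    fix \<omega>' assume "\<omega>' \<in> sample_space N"
    then show "(if disagreement N \<omega>' = disagreement N \<omega> then prob_pt N \<theta> \<omega>' else 0) =
      (\<Prod>i<N. if dd (fst \<omega>' i) (snd \<omega>' i) = dd (fst \<omega> i) (snd \<omega> i) then pp i (fst \<omega>' i) (snd \<omega>' i) else 0)"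
      by (simp only: pt dis_eq_iff prod_if)
  qed
  also have "\<dots> = (\<Prod>i<N. (if dd True True = dd (fst \<omega> i) (snd \<omega> i) then pp i True True else 0) +
        (if dd True False = dd (fst \<omega> i) (snd \<omega> i) then pp i True False else 0) +
        (if dd False True = dd (fst \<omega> i) (snd \<omega> i) then pp i False True else 0) +
        (if dd False False = dd (fst \<omega> i) (snd \<omega> i) then pp i False False else 0))"
    by (rule sum_prod_split[where g = "\<lambda>i a b. if dd a b = dd (fst \<omega> i) (snd \<omega> i) then pp i a b else 0"])
  also have "\<dots> = (\<Prod>i<N. c i * pp i (fst \<omega> i) (snd \<omega> i))"
  proof (rule prod.cong[OF refl])
    fix i
    show "(if dd True True = dd (fst \<omega> i) (snd \<omega> i) then pp i True True else 0) +
        (if dd True False = dd (fst \<omega> i) (snd \<omega> i) then pp i True False else 0) +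
        (if dd False True = dd (fst \<omega> i) (snd \<omega> i) then pp i False True else 0) +
        (if dd False False = dd (fst \<omega> i) (snd \<omega> i) then pp i False False else 0) =
        c i * pp i (fst \<omega> i) (snd \<omega> i)"
      by (cases "fst \<omega> i"; cases "snd \<omega> i") (simp_all add: dd_def c_def pp_def pair_prob_def)
  qed
  finally have sumeq: "(\<Sum>\<omega>'\<in>{\<omega>'\<in>sample_space N. disagreement N \<omega>' = disagreement N \<omega>}. prob_pt N \<theta> \<omega>')
      = (\<Prod>i<N. c i * pp i (fst \<omega> i) (snd \<omega> i))" .
  have "prob_pt N \<theta> \<omega> = (\<Prod>i<N. (1 / c i) * (c i * pp i (fst \<omega> i) (snd \<omega> i)))"
    unfolding pt[OF \<omega>] by (intro prod.cong refl) (simp add: c_def)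
  also have "\<dots> = (\<Prod>i<N. (if fst \<omega> i = snd \<omega> i then 1 else 1/2)) * (\<Prod>i<N. c i * pp i (fst \<omega> i) (snd \<omega> i))"
    by (simp only: prod.distrib[symmetric]) (intro prod.cong refl, simp add: c_def)
  finally show "prob_pt N \<theta> \<omega> = (\<lambda>\<omega>. \<Prod>i<N. (if fst \<omega> i = snd \<omega> i then 1 else 1/2)) \<omega> *
      (\<Sum>\<omega>'\<in>{\<omega>'\<in>sample_space N. disagreement N \<omega>' = disagreement N \<omega>}. prob_pt N \<theta> \<omega>')"
    unfolding sumeq by simp
qed

theorem theorem1:
  fixes N :: nat and \<Theta> :: "param set"
  assumes "N \<ge> 1"
    and "\<Theta> \<subseteq> param_space_R N"
    and "nondegenerate N \<Theta>"
  shows "complete_H N \<Theta> \<and> sufficient N \<Theta> (disagreement N)"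
proof
  show "sufficient N \<Theta> (disagreement N)" by (rule suff)
  obtain z \<epsilon> where z: "z \<in> \<Theta> \<inter> R0 N" and \<epsilon>: "\<epsilon> > 0"
    and ball: "\<forall>w \<in> R0 N. param_dist N w z < \<epsilon> \<longrightarrow> w \<in> \<Theta> \<inter> R0 N"
    using assms(3) unfolding nondegenerate_def by blast
  obtain zp zr where zz: "z = (zp, zr)" by (metis prod.exhaust)
  have zr: "zr i = 0" for i using z zz by (auto simp: R0_def)
  define \<delta> where "\<delta> = \<epsilon> / real N"
  have Npos: "real N > 0" using assms(1) by simp
  have \<delta>pos: "\<delta> > 0" using \<epsilon> Npos by (simp add: \<delta>_def)
  show "complete_H N \<Theta>"
    unfolding complete_H_def
  proof (intro allI impI)
    fix f :: "(nat \<Rightarrow> dv) \<Rightarrow> real"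
    assume H0: "\<forall>\<theta>\<in>\<Theta>. expect N \<theta> (\<lambda>\<omega>. f (disagreement N \<omega>)) = 0"
    show "\<forall>h\<in>dv_space N. f h = 0"
    proof (rule keyL[OF \<delta>pos, of N zp f])
      fix p assume box: "\<forall>i<N. \<bar>p i - zp i\<bar> < \<delta>"
      define p' where "p' i = (if i < N then p i else 0)" for i
      have inR0: "(p', \<lambda>_. 0) \<in> R0 N" by (simp add: R0_def p'_def)
      have sq: "(p' i - zp i)^2 < \<delta>^2" if "i < N" for i
      proof -
        have "\<bar>p' i - zp i\<bar> < \<delta>" using box that by (simp add: p'_def)
        then have "\<bar>p' i - zp i\<bar>^2 < \<delta>^2" by (intro power_strict_mono) auto
        then show ?thesis by simp
      qed
      have "(\<Sum>i<N. (p' i - zp i)^2) < (\<Sum>i<N. \<delta>^2)"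
        using assms(1) by (intro sum_strict_mono) (auto intro: sq simp: lessThan_empty_iff)
      also have "\<dots> = real N * \<delta>^2" by simp
      also have "\<dots> = \<epsilon>^2 / real N" using Npos by (simp add: \<delta>_def power2_eq_square)
      also have "\<dots> \<le> \<epsilon>^2"
      proof -
        have "\<epsilon>^2 * 1 \<le> \<epsilon>^2 * real N" using assms(1) by (intro mult_left_mono) auto
        then show ?thesis using Npos by (simp add: pos_divide_le_eq)
      qed
      finally have "sqrt (\<Sum>i<N. (p' i - zp i)^2) < sqrt (\<epsilon>^2)" by (rule real_sqrt_less_mono)
      then have "param_dist N (p', \<lambda>_. 0) z < \<epsilon>"
        using \<epsilon> by (simp add: param_dist_def zz zr)
      with inR0 ball have "(p', \<lambda>_. 0) \<in> \<Theta>" by blast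
      with H0 have "expect N (p', \<lambda>_. 0) (\<lambda>\<omega>. f (disagreement N \<omega>)) = 0" by blast
      moreover have "expect N (p', \<lambda>_. 0) (\<lambda>\<omega>. f (disagreement N \<omega>)) =
        (\<Sum>\<omega>\<in>sample_space N. (\<Prod>i<N. pair_prob (p i) 0 (fst \<omega> i) (snd \<omega> i)) * f (disagreement N \<omega>))"
        unfolding expect_def
      proof (rule sum.cong[OF refl])
        fix \<omega> assume "\<omega> \<in> sample_space N"
        moreover have "(\<Prod>i<N. pair_prob (p' i) 0 (fst \<omega> i) (snd \<omega> i)) = (\<Prod>i<N. pair_prob (p i) 0 (fst \<omega> i) (snd \<omega> i))"
          by (rule prod.cong) (auto simp: p'_def)
        ultimately show "prob_pt N (p', \<lambda>_. 0) \<omega> * f (disagreement N \<omega>) =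
          (\<Prod>i<N. pair_prob (p i) 0 (fst \<omega> i) (snd \<omega> i)) * f (disagreement N \<omega>)"
          by (simp add: prob_pt_def)
      qed
      ultimately show "(\<Sum>\<omega>\<in>sample_space N. (\<Prod>i<N. pair_prob (p i) 0 (fst \<omega> i) (snd \<omega> i)) * f (disagreement N \<omega>)) = 0"
        by simp
    qed
  qed
qed

end
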